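(* Let $0<q<1$, $\alpha>-1$ and let $n\ge0$ be an integer. Then \[ \det\left((q^{\alpha+1};q)_{j+k}\,q^{-\binom{j+k+1}{2}-\alpha(j+k)}\right)_{j,k=0}^{n}=\frac{\prod_{m=0}^{n}(q;q)_m\,(q^{\alpha+1};q)_m}{q^{\,n(n+1)(4n+6\alpha+5)/6}} . \]
   Context: For a complex $a$ and $0<q<1$, $(a;q)_\infty=\prod_{i=0}^\infty(1-aq^i)$ and $(a;q)_m=(a;q)_\infty/(aq^m;q)_\infty=\prod_{i=0}^{m-1}(1-aq^i)$ for integers $m\ge0$. *)

theory Defs
  imports Complex_Main "Jordan_Normal_Form.Determinant"
begin

definition qpoch :: "real \<Rightarrow> real \<Rightarrow> nat \<Rightarrow> real" where
  "qpoch a q m = (\<Prod>i<m. 1 - a * q ^ i)"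

end

theory Submission
  imports Defs
begin
lemma if_times0: "(if P then (x::real) else 0) * y = (if P then x * y else 0)" "y * (if P then (x::real) else 0) = (if P then y * x else 0)" by auto

lemma det_scale:
  fixes u w :: "nat \<Rightarrow> real" and B :: "nat \<Rightarrow> nat \<Rightarrow> real"
  shows "det (mat n n (\<lambda>(j,k). u j * w k * B j k)) = (\<Prod>j<n. u j) * (\<Prod>k<n. w k) * det (mat n n (\<lambda>(j,k). B j k))"
proof -
  let ?Du = "mat n n (\<lambda>(i,j). if i = j then u i else 0)"
  let ?Dw = "mat n n (\<lambda>(i,j). if i = j then w i else 0)"
  let ?B = "mat n n (\<lambda>(j,k). B j k)"
  have 1: "?Du * ?B = mat n n (\<lambda>(j,k). u j * B j k)"
    by (rule eq_matI) (auto simp: scalar_prod_def if_times0)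
  have 2: "mat n n (\<lambda>(j,k). u j * B j k) * ?Dw = mat n n (\<lambda>(j,k). u j * w k * B j k)"
    by (rule eq_matI) (auto simp: scalar_prod_def if_times0)
  have du: "det ?Du = (\<Prod>j<n. u j)"
    by (subst det_upper_triangular[of _ n]) (auto simp: upper_triangular_def prod_list_diag_prod atLeast0LessThan)
  have dw: "det ?Dw = (\<Prod>j<n. w j)"
    by (subst det_upper_triangular[of _ n]) (auto simp: upper_triangular_def prod_list_diag_prod atLeast0LessThan)
  have "det (mat n n (\<lambda>(j,k). u j * w k * B j k)) = det (?Du * ?B * ?Dw)" using 1 2 by simp
  also have "\<dots> = det ?Du * det ?B * det ?Dw"
  proof -
    have c1: "?Du \<in> carrier_mat n n" "?B \<in> carrier_mat n n" "?Dw \<in> carrier_mat n n" by auto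
    have c2: "?Du * ?B \<in> carrier_mat n n" by auto
    show ?thesis using det_mult[OF c2 c1(3)] det_mult[OF c1(1) c1(2)] by simp
  qed
  finally show ?thesis using du dw by simp
qed

definition PP :: "(nat \<Rightarrow> real) \<Rightarrow> nat \<Rightarrow> real \<Rightarrow> real" where
  "PP c j y = (\<Prod>i<j. y - c i)"

lemma vdm: "det (mat n n (\<lambda>(j,k). PP c j (x k))) = (\<Prod>k<n. \<Prod>j<k. x k - x j)"
proof (induction n arbitrary: x)
  case 0
  then show ?case by (subst det_dim_zero) auto
next
  case (Suc n)
  let ?M = "mat (Suc n) (Suc n) (\<lambda>(j,k). PP c j (x k))"
  let ?E = "mat (Suc n) (Suc n) (\<lambda>(j,i). (if i = j then 1 else 0) + (if Suc i = j then -(x 0 - c i) else 0))"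
  let ?N = "mat (Suc n) (Suc n) (\<lambda>(j,k). if j = 0 then 1 else (x k - x 0) * PP c (j-1) (x k))"
  have EM: "?E * ?M = ?N"
  proof (rule eq_matI)
    fix j k assume j: "j < dim_row ?N" and k: "k < dim_col ?N"
    show "(?E * ?M) $$ (j,k) = ?N $$ (j,k)"
    proof (cases j)
      case 0
      then show ?thesis using j k by (simp add: scalar_prod_def distrib_right sum.distrib if_times0 PP_def)
    next
      case (Suc j')
      then have "(?E * ?M) $$ (j,k) = PP c (Suc j') (x k) - (x 0 - c j') * PP c j' (x k)"
        using j k by (simp add: scalar_prod_def distrib_right sum.distrib if_times0 algebra_simps, intro impI, simp add: not_less_eq, subgoal_tac "n = Suc j'", simp, linarith)
      also have "\<dots> = (x k - x 0) * PP c j' (x k)"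
        by (simp add: PP_def algebra_simps)
      finally show ?thesis using Suc j k by simp
    qed
  qed auto
  have dE: "det ?E = 1"
    by (subst det_lower_triangular[of "Suc n"]) (auto simp: prod_list_diag_prod)
  have cM: "?M \<in> carrier_mat (Suc n) (Suc n)" and cE: "?E \<in> carrier_mat (Suc n) (Suc n)"
    and cN: "?N \<in> carrier_mat (Suc n) (Suc n)" by auto
  have "det ?N = det ?M"
    using det_mult[OF cE cM] EM dE by simp
  have "det ?N = (\<Sum>i<Suc n. ?N $$ (i,0) * cofactor ?N i 0)"
    by (rule laplace_expansion_column[OF cN]) simp
  also have "\<dots> = cofactor ?N 0 0"
    by (subst sum.lessThan_Suc_shift) simp
  also have "\<dots> = det (mat n n (\<lambda>(j,k). (1::real) * (x (Suc k) - x 0) * PP c j (x (Suc k))))"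
    unfolding cofactor_def
    by (simp, rule arg_cong[where f=det], rule eq_matI, auto simp: mat_delete_def)
  also have "\<dots> = (\<Prod>k<n. x (Suc k) - x 0) * det (mat n n (\<lambda>(j,k). PP c j ((x \<circ> Suc) k)))"
    using det_scale[where u="\<lambda>_. 1" and w="\<lambda>k. x (Suc k) - x 0" and B="\<lambda>j k. PP c j (x (Suc k))" and n=n] by simp
  also have "\<dots> = (\<Prod>k<n. x (Suc k) - x 0) * (\<Prod>k<n. \<Prod>j<k. x (Suc k) - x (Suc j))"
    using Suc.IH[of "x \<circ> Suc"] by simp
  also have "\<dots> = (\<Prod>k<Suc n. \<Prod>j<k. x k - x j)"
  proof -
    have h: "\<And>k. (\<Prod>j<Suc k. x (Suc k) - x j) = (x (Suc k) - x 0) * (\<Prod>j<k. x (Suc k) - x (Suc j))"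
      by (rule prod.lessThan_Suc_shift)
    show ?thesis
      by (simp only: prod.lessThan_Suc_shift[of "\<lambda>k. \<Prod>j<k. x k - x j"] h, simp add: prod.distrib)
  qed
  finally show ?case using \<open>det ?N = det ?M\<close> by simp
qed


lemma qpoch_add: "qpoch a q (k + j) = qpoch a q k * (\<Prod>i<j. 1 - a * q ^ (k + i))"
  by (induction j) (simp_all add: qpoch_def)

lemma choose2_real: "real (Suc m choose 2) = real m * (real m + 1) / 2"
  by (induction m) (simp_all add: numeral_2_eq_2 field_simps)

lemma entry_eq:
  fixes q a \<alpha> :: real
  assumes q: "0 < q"
  defines "u \<equiv> \<lambda>j::nat. q powr (- (real j * (real j + 1) / 2) - \<alpha> * real j)"
  shows "qpoch a q (j+k) * q powr (- real ((j+k+1) choose 2) - \<alpha> * real (j+k))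
     = u j * (qpoch a q k * u k) * PP (\<lambda>i. a * q ^ i) j (q powr (- real k))"
proof -
  have pp: "PP (\<lambda>i. a * q ^ i) j (q powr (- real k)) = q powr (- real (k * j)) * (\<Prod>i<j. 1 - a * q ^ (k + i))"
  proof -
    have "\<And>i. q powr (- real k) - a * q ^ i = q powr (- real k) * (1 - a * q ^ (k + i))"
    proof -
      fix i
      have "q powr (- real k) * q ^ (k + i) = q ^ i"
        using q by (simp add: powr_realpow[symmetric] powr_add[symmetric])
      then show "q powr (- real k) - a * q ^ i = q powr (- real k) * (1 - a * q ^ (k + i))"
        by (simp add: algebra_simps)
    qed
    then have "PP (\<lambda>i. a * q ^ i) j (q powr (- real k)) = (\<Prod>i<j. q powr (- real k) * (1 - a * q ^ (k + i)))"
      by (simp add: PP_def)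
    also have "\<dots> = (q powr (- real k)) ^ j * (\<Prod>i<j. 1 - a * q ^ (k + i))"
      by (simp add: prod.distrib)
    also have "(q powr (- real k)) ^ j = q powr (- real (k * j))"
    proof -
      have "(q powr (- real k)) ^ j = (q powr (- real k)) powr real j" using q by (simp add: powr_realpow)
      also have "\<dots> = q powr (- real k * real j)" by (simp add: powr_powr)
      finally show ?thesis by simp
    qed
    finally show ?thesis .
  qed
  have ex: "- real ((j+k+1) choose 2) - \<alpha> * real (j+k) =
     (- (real j * (real j + 1) / 2) - \<alpha> * real j) + (- (real k * (real k + 1) / 2) - \<alpha> * real k) + (- real (k * j))"
    using choose2_real[of "j+k"] by (simp add: field_simps)
  have "q powr (- real ((j+k+1) choose 2) - \<alpha> * real (j+k)) = u j * u k * q powr (- real (k * j))"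
    unfolding ex u_def powr_add by simp
  then show ?thesis
    using qpoch_add[of a q k j] pp by (simp add: add.commute mult_ac)
qed

lemma powr_pow_aux: "0 < (q::real) \<Longrightarrow> (q powr (- real k)) ^ j = q powr (- real (k * j))"
proof -
  assume q: "0 < q"
  have "(q powr (- real k)) ^ j = (q powr (- real k)) powr real j" using q by (simp add: powr_realpow)
  also have "\<dots> = q powr (- real k * real j)" by (simp add: powr_powr)
  finally show ?thesis by simp
qed

lemma vprod:
  fixes q :: real assumes q: "0 < q"
  shows "(\<Prod>j<k. q powr (- real k) - q powr (- real j)) = q powr (- real (k * k)) * qpoch q q k"
proof -
  have "(\<Prod>j<k. q powr (- real k) - q powr (- real j)) = (\<Prod>j<k. q powr (- real k) * (1 - q ^ (k - j)))"
  proof (rule prod.cong)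
    fix j assume "j \<in> {..<k}"
    then have jk: "j < k" by simp
    have "q powr (- real k) * q ^ (k - j) = q powr (- real k + real (k - j))"
      by (simp only: powr_add powr_realpow[OF q])
    also have "\<dots> = q powr (- real j)" using jk by (simp add: of_nat_diff)
    finally show "q powr (- real k) - q powr (- real j) = q powr (- real k) * (1 - q ^ (k - j))"
      by (simp add: algebra_simps)
  qed simp
  also have "\<dots> = (q powr (- real k)) ^ k * (\<Prod>j<k. 1 - q ^ (k - j))"
    by (simp add: prod.distrib)
  also have "(\<Prod>j<k. 1 - q ^ (k - j)) = (\<Prod>i<k. 1 - q ^ (k - (k - Suc i)))"
    by (rule prod.nat_diff_reindex[symmetric])
  also have "\<dots> = qpoch q q k"
    unfolding qpoch_def by (rule prod.cong) (auto simp: Suc_diff_le)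
  finally show ?thesis using powr_pow_aux[OF q, of k k] by simp
qed

lemma expsum: "(\<Sum>k<Suc n. 2 * (- (real k * (real k + 1) / 2) - \<alpha> * real k) - real (k * k))
   = - (real n * (real n + 1) * (4 * real n + 6 * \<alpha> + 5) / 6)"
  by (induction n) (simp_all add: field_simps)

theorem mainTheorem8:
  fixes q \<alpha> :: real and n :: nat
  assumes "0 < q" "q < 1" "\<alpha> > -1"
  shows "det (mat (n+1) (n+1) (\<lambda>(j,k).
            qpoch (q powr (\<alpha>+1)) q (j+k)
            * q powr (- real ((j+k+1) choose 2) - \<alpha> * real (j+k))))
       = (\<Prod>m\<in>{0..n}. qpoch q q m * qpoch (q powr (\<alpha>+1)) q m)
         / q powr (real n * (real n + 1) * (4 * real n + 6 * \<alpha> + 5) / 6)"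
proof -
  have q: "0 < q" by fact
  define a where "a = q powr (\<alpha>+1)"
  define u where "u j = q powr (- (real j * (real j + 1) / 2) - \<alpha> * real j)" for j :: nat
  define N where "N = n + 1"
  have eqM: "mat N N (\<lambda>(j,k). qpoch a q (j+k) * q powr (- real ((j+k+1) choose 2) - \<alpha> * real (j+k)))
     = mat N N (\<lambda>(j,k). u j * (qpoch a q k * u k) * PP (\<lambda>i. a * q ^ i) j (q powr (- real k)))"
  proof (rule eq_matI)
    fix i j assume "i < dim_row (mat N N (\<lambda>(j,k). u j * (qpoch a q k * u k) * PP (\<lambda>i. a * q ^ i) j (q powr (- real k))))"
      "j < dim_col (mat N N (\<lambda>(j,k). u j * (qpoch a q k * u k) * PP (\<lambda>i. a * q ^ i) j (q powr (- real k))))"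
    then show "mat N N (\<lambda>(j,k). qpoch a q (j+k) * q powr (- real ((j+k+1) choose 2) - \<alpha> * real (j+k))) $$ (i,j)
       = mat N N (\<lambda>(j,k). u j * (qpoch a q k * u k) * PP (\<lambda>i. a * q ^ i) j (q powr (- real k))) $$ (i,j)"
      using entry_eq[OF q, where a=a and \<alpha>=\<alpha> and j=i and k=j] by (simp add: u_def)
  qed auto
  have "det (mat N N (\<lambda>(j,k). u j * (qpoch a q k * u k) * PP (\<lambda>i. a * q ^ i) j (q powr (- real k))))
     = (\<Prod>j<N. u j) * (\<Prod>k<N. qpoch a q k * u k) * (\<Prod>k<N. \<Prod>j<k. q powr (- real k) - q powr (- real j))"
    using det_scale[where u=u and w="\<lambda>k. qpoch a q k * u k" and B="\<lambda>j k. PP (\<lambda>i. a * q ^ i) j (q powr (- real k))" and n=N]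
      vdm[where c="\<lambda>i. a * q ^ i" and x="\<lambda>k. q powr (- real k)" and n=N] by simp
  also have "\<dots> = (\<Prod>k<N. (qpoch q q k * qpoch a q k) * (u k * u k * q powr (- real (k * k))))"
    by (simp add: vprod[OF q] prod.distrib mult_ac)
  also have "\<dots> = (\<Prod>k<N. qpoch q q k * qpoch a q k) * (\<Prod>k<N. q powr (2 * (- (real k * (real k + 1) / 2) - \<alpha> * real k) - real (k * k)))"
  proof -
    have pw: "u k * u k * q powr (- real (k * k)) = q powr (2 * (- (real k * (real k + 1) / 2) - \<alpha> * real k) - real (k * k))" for k
    proof -
      let ?A = "- (real k * (real k + 1) / 2) - \<alpha> * real k"
      have "u k * u k * q powr (- real (k * k)) = q powr (?A + ?A + (- real (k * k)))"
        unfolding u_def powr_add by simp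
      also have "?A + ?A + (- real (k * k)) = 2 * ?A - real (k * k)" by simp
      finally show ?thesis .
    qed
    show ?thesis unfolding prod.distrib[symmetric] pw ..
  qed
  also have "(\<Prod>k<N. q powr (2 * (- (real k * (real k + 1) / 2) - \<alpha> * real k) - real (k * k)))
     = q powr (- (real n * (real n + 1) * (4 * real n + 6 * \<alpha> + 5) / 6))"
    using powr_sum[of q "\<lambda>k. 2 * (- (real k * (real k + 1) / 2) - \<alpha> * real k) - real (k * k)" "{..<N}"] q expsum[where n=n and \<alpha>=\<alpha>]
    unfolding N_def by simp
  finally have D: "det (mat N N (\<lambda>(j,k). qpoch a q (j+k) * q powr (- real ((j+k+1) choose 2) - \<alpha> * real (j+k))))
     = (\<Prod>k<N. qpoch q q k * qpoch a q k) * q powr (- (real n * (real n + 1) * (4 * real n + 6 * \<alpha> + 5) / 6))"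
    unfolding eqM .
  have S: "{..<n+1} = {0..n}" by auto
  show ?thesis
    using D unfolding a_def N_def S powr_minus divide_inverse by (simp only:)
qed
end
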